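(* In the setting described in the context, let \texttt{Orienteering} be a routine that solves the orienteering problem within constant factor $1/\lambda$ (with $\lambda\ge 1$): for any node weights $\nu(j)\ge 0$ it returns a path $\hat\rho\in\mathcal{X}(p_s,\omega)$ such that for every path $\rho\in\mathcal{X}(p_s,\omega)$, $$\sum_{j=1}^V \mathbb{I}_j(\hat{\rho})\nu(j) \ge \frac{1}{\lambda}\sum_{j=1}^V \mathbb{I}_j(\rho)\nu(j).$$ Let $c_j>0$ for $j=1,\dots,V$, and let $\hat\rho$ be the path returned by \texttt{Orienteering} with node weights $\nu(j)=\zeta_j c_j$. Then for every $\rho\in\mathcal{X}(p_s,\omega)$, $$\sum_{j=1}^Vc_j\,\mathbb{E}[z_j(\hat{\rho})] \ge \frac{p_s}{\lambda}\sum_{j=1}^V c_j\,\mathbb{E}[z_j(\rho)].$$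
   Context: Let $\mathcal{G}=(\mathcal{V},\mathcal{E})$ be a finite simple graph with node set $\mathcal{V}=\{1,\dots,V\}$ and edge weights $\omega:\mathcal{E}\to(0,1]$ (survival probabilities). A path $\rho$ is a sequence of nodes $\rho(0),\dots,\rho(\lvert\rho\rvert)$ with $(\rho(n-1),\rho(n))\in\mathcal{E}$ for each $n$. For a path $\rho$, let $s_n(\rho)$, $n=1,\dots,\lvert\rho\rvert$, be independent Bernoulli variables with $\mathbb{P}\{s_n(\rho)=1\}=\omega((\rho(n-1),\rho(n)))$, $a_n(\rho)=\prod_{i=1}^n s_i(\rho)$, and $z_j(\rho)=\max_{n=1,\dots,\lvert\rho\rvert} a_n(\rho)\,\mathbb{I}\{\rho(n)=j\}$. Let $\mathbb{I}_j(\rho)$ equal $1$ if $\rho(n)=j$ for some $n\in\{1,\dots,\lvert\rho\rvert\}$ and $0$ otherwise. Given start node $v_s$, terminal node $v_t$ and $p_s\in(0,1]$, $\mathcal{X}(p_s,\omega)$ is the (assumed nonempty) set of paths $\rho$ with $\rho(0)=v_s$, $\rho(\lvert\rho\rvert)=v_t$ and $\mathbb{P}\{a_{\lvert\rho\rvert}(\rho)=1\}\ge p_s$ (equivalently $\sum_{e\in\rho}-\log\omega(e)\le-\log p_s$). Define $\zeta_j=\max_{\rho\in\mathcal{X}(p_s,\omega)}\mathbb{E}[z_j(\rho)]$ (with $\zeta_j=0$ if no feasible path reaches $j$). *)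

theory Defs
  imports "HOL-Probability.Probability"
begin

text \<open>Finite simple graph on nodes 1..V: symmetric irreflexive edge set, edge weights
  (survival probabilities) in (0,1], symmetric in the endpoints.\<close>
definition simple_weighted_graph :: "nat \<Rightarrow> (nat \<times> nat) set \<Rightarrow> (nat \<Rightarrow> nat \<Rightarrow> real) \<Rightarrow> bool" where
  "simple_weighted_graph V E \<omega> \<longleftrightarrow>
     E \<subseteq> {1..V} \<times> {1..V} \<and>
     (\<forall>u v. (u, v) \<in> E \<longrightarrow> (v, u) \<in> E \<and> u \<noteq> v \<and> \<omega> u v = \<omega> v u \<and> 0 < \<omega> u v \<and> \<omega> u v \<le> 1)"

text \<open>A path is a nonempty list of nodes rho(0),...,rho(|rho|); its length |rho| is the number of edges.\<close>
definition plen :: "nat list \<Rightarrow> nat" where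
  "plen \<rho> = length \<rho> - 1"

definition is_path :: "(nat \<times> nat) set \<Rightarrow> nat list \<Rightarrow> bool" where
  "is_path E \<rho> \<longleftrightarrow> \<rho> \<noteq> [] \<and> (\<forall>n\<in>{1..plen \<rho>}. (\<rho> ! (n - 1), \<rho> ! n) \<in> E)"

text \<open>Joint law of the independent Bernoulli variables s_1(rho),...,s_|rho|(rho).\<close>
definition surv_pmf :: "(nat \<Rightarrow> nat \<Rightarrow> real) \<Rightarrow> nat list \<Rightarrow> (nat \<Rightarrow> bool) pmf" where
  "surv_pmf \<omega> \<rho> = Pi_pmf {1..plen \<rho>} False (\<lambda>n. bernoulli_pmf (\<omega> (\<rho> ! (n - 1)) (\<rho> ! n)))"

definition a_var :: "(nat \<Rightarrow> bool) \<Rightarrow> nat \<Rightarrow> real" where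
  "a_var s n = (\<Prod>i\<in>{1..n}. if s i then 1 else 0)"

text \<open>z_j(rho) = max_{n=1..|rho|} a_n(rho) I{rho(n)=j}  (taken as 0 for the trivial path |rho|=0)\<close>
definition z_var :: "nat list \<Rightarrow> nat \<Rightarrow> (nat \<Rightarrow> bool) \<Rightarrow> real" where
  "z_var \<rho> j s = Max (insert 0 ((\<lambda>n. a_var s n * (if \<rho> ! n = j then 1 else 0)) ` {1..plen \<rho>}))"

definition Ez :: "(nat \<Rightarrow> nat \<Rightarrow> real) \<Rightarrow> nat list \<Rightarrow> nat \<Rightarrow> real" where
  "Ez \<omega> \<rho> j = measure_pmf.expectation (surv_pmf \<omega> \<rho>) (z_var \<rho> j)"

definition surv_prob :: "(nat \<Rightarrow> nat \<Rightarrow> real) \<Rightarrow> nat list \<Rightarrow> real" where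
  "surv_prob \<omega> \<rho> = measure_pmf.prob (surv_pmf \<omega> \<rho>) {s. a_var s (plen \<rho>) = 1}"

definition feasible :: "(nat \<times> nat) set \<Rightarrow> (nat \<Rightarrow> nat \<Rightarrow> real) \<Rightarrow> nat \<Rightarrow> nat \<Rightarrow> real \<Rightarrow> nat list \<Rightarrow> bool" where
  "feasible E \<omega> vs vt ps \<rho> \<longleftrightarrow> is_path E \<rho> \<and> hd \<rho> = vs \<and> last \<rho> = vt \<and> surv_prob \<omega> \<rho> \<ge> ps"

definition visits :: "nat list \<Rightarrow> nat \<Rightarrow> real" where
  "visits \<rho> j = (if \<exists>n\<in>{1..plen \<rho>}. \<rho> ! n = j then 1 else 0)"

text \<open>zeta_j = max over feasible paths of E[z_j(rho)] (0 if none reaches j); values lie in [0,1],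
  and the maximum is attained, so it coincides with this supremum.\<close>
definition zeta :: "(nat \<times> nat) set \<Rightarrow> (nat \<Rightarrow> nat \<Rightarrow> real) \<Rightarrow> nat \<Rightarrow> nat \<Rightarrow> real \<Rightarrow> nat \<Rightarrow> real" where
  "zeta E \<omega> vs vt ps j = Sup (insert 0 ((\<lambda>\<rho>. Ez \<omega> \<rho> j) ` {\<rho>. feasible E \<omega> vs vt ps \<rho>}))"

end

theory Submission
  imports Defs
begin

lemma a_var_eq: "a_var s n = (if \<forall>i\<in>{1..n}. s i then 1 else 0)"
proof (cases "\<forall>i\<in>{1..n}. s i")
  case True
  then have "a_var s n = (\<Prod>i\<in>{1..n}. (1::real))" unfolding a_var_def by (intro prod.cong) auto
  then show ?thesis using True by simp
next
  case False
  then obtain i where "i \<in> {1..n}" "\<not> s i" by auto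
  then have "a_var s n = 0" unfolding a_var_def by (intro prod_zero) auto
  then show ?thesis using False by simp
qed

lemma a_var_mono: "m \<le> n \<Longrightarrow> a_var s n \<le> a_var s m"
  by (auto simp: a_var_eq)

lemma a_var_bounds: "0 \<le> a_var s n" "a_var s n \<le> 1"
  by (auto simp: a_var_eq)

lemma z_var_bounds: "0 \<le> z_var \<rho> j s" "z_var \<rho> j s \<le> 1"
  unfolding z_var_def
  by (auto simp: a_var_eq intro!: Max_ge Max.boundedI)

lemma integrable_bdd:
  assumes "\<And>s. \<bar>f s\<bar> \<le> 1"
  shows "integrable (measure_pmf p) (f :: _ \<Rightarrow> real)"
  by (rule measure_pmf.integrable_const_bound[where B=1]) (auto simp: assms)

lemma Ez_bounds: "0 \<le> Ez \<omega> \<rho> j" "Ez \<omega> \<rho> j \<le> 1"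
proof -
  have i: "integrable (measure_pmf (surv_pmf \<omega> \<rho>)) (z_var \<rho> j)"
    by (rule integrable_bdd) (use z_var_bounds in auto)
  show "0 \<le> Ez \<omega> \<rho> j" unfolding Ez_def
    by (rule integral_nonneg_AE) (auto simp: z_var_bounds)
  have "Ez \<omega> \<rho> j \<le> measure_pmf.expectation (surv_pmf \<omega> \<rho>) (\<lambda>_. 1)"
    unfolding Ez_def by (rule integral_mono[OF i]) (auto simp: z_var_bounds)
  then show "Ez \<omega> \<rho> j \<le> 1" by simp
qed

lemma Ez_unvisited: "visits \<rho> j = 0 \<Longrightarrow> Ez \<omega> \<rho> j = 0"
proof -
  assume "visits \<rho> j = 0"
  then have "\<forall>n\<in>{1..plen \<rho>}. \<rho> ! n \<noteq> j" unfolding visits_def by (auto split: if_splits)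
  then have "\<And>s. z_var \<rho> j s = 0" unfolding z_var_def
    by (intro antisym Max.boundedI) auto
  then have "z_var \<rho> j = (\<lambda>_. 0)" by auto
  then show ?thesis unfolding Ez_def by simp
qed

lemma Ez_lower:
  assumes "feasible E \<omega> vs vt ps \<rho>"
  shows "Ez \<omega> \<rho> j \<ge> ps * visits \<rho> j"
proof (cases "visits \<rho> j = 0")
  case True then show ?thesis by (simp add: Ez_bounds)
next
  case False
  then obtain n where n: "n \<in> {1..plen \<rho>}" "\<rho> ! n = j" unfolding visits_def by (auto split: if_splits)
  have vis: "visits \<rho> j = 1" using False unfolding visits_def by (auto split: if_splits)
  have le: "a_var s (plen \<rho>) \<le> z_var \<rho> j s" for s
  proof -
    have "a_var s (plen \<rho>) \<le> a_var s n" using n by (intro a_var_mono) auto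
    also have "\<dots> \<le> z_var \<rho> j s" unfolding z_var_def using n by (intro Max_ge) auto
    finally show ?thesis .
  qed
  have ind: "(\<lambda>s. a_var s (plen \<rho>)) = indicator {s. a_var s (plen \<rho>) = 1}"
    by (auto simp: a_var_eq indicator_def fun_eq_iff)
  have "ps \<le> surv_prob \<omega> \<rho>" using assms unfolding feasible_def by simp
  also have "surv_prob \<omega> \<rho> = measure_pmf.expectation (surv_pmf \<omega> \<rho>) (\<lambda>s. a_var s (plen \<rho>))"
    unfolding surv_prob_def ind by simp
  also have "\<dots> \<le> Ez \<omega> \<rho> j" unfolding Ez_def
    by (rule integral_mono) (auto intro!: integrable_bdd le simp: a_var_bounds z_var_bounds abs_le_iff
        intro: order.trans[OF _ a_var_bounds(2)] order.trans[OF _ z_var_bounds(2)]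
        order.trans[OF _ a_var_bounds(1)])
  finally show ?thesis using vis by simp
qed

lemma zeta_bounds: "0 \<le> zeta E \<omega> vs vt ps j" "zeta E \<omega> vs vt ps j \<le> 1"
  and zeta_upper: "feasible E \<omega> vs vt ps \<rho> \<Longrightarrow> Ez \<omega> \<rho> j \<le> zeta E \<omega> vs vt ps j"
proof -
  let ?S = "insert 0 ((\<lambda>\<rho>. Ez \<omega> \<rho> j) ` {\<rho>. feasible E \<omega> vs vt ps \<rho>})"
  have b: "bdd_above ?S" by (rule bdd_aboveI[where M=1]) (auto simp: Ez_bounds)
  show "0 \<le> zeta E \<omega> vs vt ps j" unfolding zeta_def by (rule cSup_upper[OF _ b]) auto
  show "zeta E \<omega> vs vt ps j \<le> 1" unfolding zeta_def by (rule cSup_least) (auto simp: Ez_bounds)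
  show "feasible E \<omega> vs vt ps \<rho> \<Longrightarrow> Ez \<omega> \<rho> j \<le> zeta E \<omega> vs vt ps j"
    unfolding zeta_def by (rule cSup_upper[OF _ b]) auto
qed

theorem lemma2:
  fixes V :: nat and E :: "(nat \<times> nat) set" and \<omega> :: "nat \<Rightarrow> nat \<Rightarrow> real"
    and vs vt :: nat and ps lam :: real
    and Orienteering :: "(nat \<Rightarrow> real) \<Rightarrow> nat list"
    and c :: "nat \<Rightarrow> real" and \<rho> :: "nat list"
  assumes graph: "simple_weighted_graph V E \<omega>"
    and vs: "vs \<in> {1..V}" and vt: "vt \<in> {1..V}"
    and ps: "0 < ps" "ps \<le> 1"
    and nonempty: "\<exists>\<rho>. feasible E \<omega> vs vt ps \<rho>"
    and lam: "lam \<ge> 1"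
    and orient: "\<And>\<nu>. (\<forall>j\<in>{1..V}. \<nu> j \<ge> 0) \<Longrightarrow>
        feasible E \<omega> vs vt ps (Orienteering \<nu>) \<and>
        (\<forall>\<rho>. feasible E \<omega> vs vt ps \<rho> \<longrightarrow>
           (\<Sum>j=1..V. visits (Orienteering \<nu>) j * \<nu> j) \<ge> (1 / lam) * (\<Sum>j=1..V. visits \<rho> j * \<nu> j))"
    and c: "\<forall>j\<in>{1..V}. c j > 0"
    and rho: "feasible E \<omega> vs vt ps \<rho>"
  shows "(\<Sum>j=1..V. c j * Ez \<omega> (Orienteering (\<lambda>j. zeta E \<omega> vs vt ps j * c j)) j)
           \<ge> (ps / lam) * (\<Sum>j=1..V. c j * Ez \<omega> \<rho> j)"
proof -
  define \<nu> where "\<nu> = (\<lambda>j. zeta E \<omega> vs vt ps j * c j)"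
  define r where "r = Orienteering \<nu>"
  have nn: "\<forall>j\<in>{1..V}. \<nu> j \<ge> 0" using c zeta_bounds(1) unfolding \<nu>_def
    by (simp add: less_imp_le)
  have fr: "feasible E \<omega> vs vt ps r" and opt:
    "(\<Sum>j=1..V. visits r j * \<nu> j) \<ge> (1 / lam) * (\<Sum>j=1..V. visits \<rho> j * \<nu> j)"
    using orient[OF nn] rho unfolding r_def by auto
  have vis01: "visits x j = 0 \<or> visits x j = 1" for x j unfolding visits_def by auto
  have step1: "(\<Sum>j=1..V. c j * Ez \<omega> r j) \<ge> ps * (\<Sum>j=1..V. visits r j * \<nu> j)"
    unfolding sum_distrib_left
  proof (rule sum_mono)
    fix j assume j: "j \<in> {1..V}"
    have "ps * (visits r j * \<nu> j) \<le> ps * visits r j * c j"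
      unfolding \<nu>_def using zeta_bounds(2)[of E \<omega> vs vt ps j] c j ps vis01[of r j]
      by (auto simp: mult_le_cancel_right1)
    also have "\<dots> \<le> Ez \<omega> r j * c j"
      using Ez_lower[OF fr, of j] c j by (intro mult_right_mono) (auto simp: less_imp_le)
    finally show "ps * (visits r j * \<nu> j) \<le> c j * Ez \<omega> r j" by (simp add: mult.commute)
  qed
  have step2: "(\<Sum>j=1..V. c j * Ez \<omega> \<rho> j) \<le> (\<Sum>j=1..V. visits \<rho> j * \<nu> j)"
  proof (rule sum_mono)
    fix j assume j: "j \<in> {1..V}"
    show "c j * Ez \<omega> \<rho> j \<le> visits \<rho> j * \<nu> j"
    proof (cases "visits \<rho> j = 0")
      case True then show ?thesis using Ez_unvisited[OF True] nn j by simp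
    next
      case False
      then have "visits \<rho> j = 1" using vis01 by blast
      then show ?thesis unfolding \<nu>_def using zeta_upper[OF rho, of j] c j
        by (simp add: mult.commute)
    qed
  qed
  have lampos: "0 < lam" using lam by simp
  have "(ps / lam) * (\<Sum>j=1..V. c j * Ez \<omega> \<rho> j) \<le> (ps / lam) * (\<Sum>j=1..V. visits \<rho> j * \<nu> j)"
    using step2 ps lampos by (intro mult_left_mono) auto
  also have "\<dots> = ps * ((1 / lam) * (\<Sum>j=1..V. visits \<rho> j * \<nu> j))" by simp
  also have "\<dots> \<le> ps * (\<Sum>j=1..V. visits r j * \<nu> j)"
    using opt ps by (intro mult_left_mono) auto
  also have "\<dots> \<le> (\<Sum>j=1..V. c j * Ez \<omega> r j)" by (rule step1)
  finally show ?thesis unfolding r_def \<nu>_def .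
qed

end
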